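(* Let $G_{\mathrm{AndI}}$ be the $q$-grammar with master variables $\{x,y\}$, rule $x_j\mapsto q^jx_jy_{j+1}$, $y_j\mapsto q^jx_j$, and order AIO, with $q$-derivative $D$. Let $\phi^{nc}$ be the $\mathbb{K}[q]$-linear multiplicative map sending $x_j\mapsto x$ and $y_j\mapsto y$ for all $j$, where $x,y$ are non-commuting indeterminates (so $\phi^{nc}(D^n(x_0))$ lies in the free algebra $\mathbb{K}[q]\langle x,y\rangle$). Then for $n\ge1$ the number of distinct monomials with nonzero coefficient in $\phi^{nc}(D^n(x_0))$ equals the Fibonacci number $F_{n+1}$, where $F_1=F_2=1$ and $F_{m+1}=F_m+F_{m-1}$.
   Context: $\mathbb{K}$ is a commutative ring with unity and characteristic zero, $q$ an indeterminate. For a set $S$ of master variables, $\mathbb{S}=\{s_i:s\in S,\ i\ge0\}$ is a set of non-commuting variables, $F(\mathbb{S})$ the free group on $\mathbb{S}$, $\mathbb{E}=\mathbb{K}[q][F(\mathbb{S})]$ its group algebra. A rule $R$ assigns to each $s_i$ an element of $\mathbb{E}$. The up-arrow $\uparrow$ is the linear map replacing each letter $s_i^{\pm1}$ by $s_{i+1}^{\pm1}$. AIO stably reorders the letters of a word according to the position of their underlying variable in $x_0,y_0,x_1,y_1,\dots$. The $q$-derivative of a $q$-grammar $(S,R,\rho)$ is the $\mathbb{K}[q]$-linear map with $D(w_1\cdots w_n)=\sum_{j=1}^n\rho\big(w_1\cdots w_{j-1}R(w_j)\uparrow(w_{j+1}\cdots w_n)\big)$ for letters $w_j$, $D^0=\mathrm{id}$,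 $D^k=D\circ D^{k-1}$. *)

theory Defs
  imports "HOL-Library.Poly_Mapping" "HOL-Computational_Algebra.Polynomial" "HOL-Number_Theory.Fib"
begin

text \<open>Master variables x, y.  A letter s_i is a pair (master, i).
  Elements of E are finitely supported K[q]-combinations of words (positive words).\<close>

datatype master = MX | MY

type_synonym letter = "master \<times> nat"

type_synonym 'a elt = "letter list \<Rightarrow>\<^sub>0 'a poly"

definition lin_ext :: "('b \<Rightarrow> ('c \<Rightarrow>\<^sub>0 'r::comm_semiring_1)) \<Rightarrow> ('b \<Rightarrow>\<^sub>0 'r) \<Rightarrow> ('c \<Rightarrow>\<^sub>0 'r)" where
  "lin_ext g f = (\<Sum>w\<in>Poly_Mapping.keys f. Poly_Mapping.map (\<lambda>c. Poly_Mapping.lookup f w * c) (g w))"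

fun up_letter :: "letter \<Rightarrow> letter" where
  "up_letter (m, i) = (m, Suc i)"

text \<open>Position of the underlying variable in x_0, y_0, x_1, y_1, ...\<close>
fun aio_key :: "letter \<Rightarrow> nat" where
  "aio_key (MX, i) = 2 * i"
| "aio_key (MY, i) = 2 * i + 1"

text \<open>AIO: stable reordering (sort_key is stable).\<close>
definition AIO :: "letter list \<Rightarrow> letter list" where
  "AIO w = sort_key aio_key w"

fun R_AndI :: "letter \<Rightarrow> 'a::comm_ring_1 elt" where
  "R_AndI (MX, j) = Poly_Mapping.single [(MX, j), (MY, Suc j)] ([:0, 1:] ^ j)"
| "R_AndI (MY, j) = Poly_Mapping.single [(MX, j)] ([:0, 1:] ^ j)"

definition D_word :: "letter list \<Rightarrow> 'a::comm_ring_1 elt" where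
  "D_word w = (\<Sum>j<length w.
      lin_ext (\<lambda>u. Poly_Mapping.single (AIO (take j w @ u @ map up_letter (drop (Suc j) w))) 1)
              (R_AndI (w ! j)))"

definition D_AndI :: "'a::comm_ring_1 elt \<Rightarrow> 'a elt" where
  "D_AndI f = lin_ext D_word f"

text \<open>phi^nc: x_j \<mapsto> x, y_j \<mapsto> y, into the free algebra K[q]<x,y>
  (monomials = words over {x,y}).\<close>
definition phi_nc :: "'a::comm_ring_1 elt \<Rightarrow> (master list \<Rightarrow>\<^sub>0 'a poly)" where
  "phi_nc f = lin_ext (\<lambda>w. Poly_Mapping.single (map fst w) 1) f"

end

theory Submission
  imports Defs "HOL-Library.Multiset"
begin


definition Pos :: "'a::{comm_ring_1,ring_char_0} poly \<Rightarrow> bool" where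
  "Pos c \<longleftrightarrow> c \<noteq> 0 \<and> (\<forall>i. coeff c i \<in> \<nat>)"

lemma Pos_nz: "Pos c \<Longrightarrow> c \<noteq> 0" by (simp add: Pos_def)

lemma Nats_sum: "(\<And>i. i \<in> A \<Longrightarrow> f i \<in> \<nat>) \<Longrightarrow> sum f A \<in> \<nat>"
  by (induction A rule: infinite_finite_induct) auto

lemma Pos_add: assumes "Pos a" "Pos (b::'a::{comm_ring_1,ring_char_0} poly)" shows "Pos (a+b)"
proof -
  from assms obtain i where "coeff a i \<noteq> 0" unfolding Pos_def by (metis poly_eqI coeff_0)
  moreover have "coeff a i \<in> \<nat>" "coeff b i \<in> \<nat>" using assms by (auto simp: Pos_def)
  ultimately obtain k m where km: "coeff a i = of_nat k" "coeff b i = of_nat m" "k \<noteq> 0"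
    by (metis Nats_cases of_nat_0)
  hence "coeff (a+b) i \<noteq> 0" by (metis coeff_add of_nat_add of_nat_eq_0_iff add_is_0)
  hence "a + b \<noteq> 0" by (metis coeff_0)
  thus ?thesis using assms by (auto simp: Pos_def)
qed

lemma Pos_mult: assumes "Pos a" "Pos (b::'a::{comm_ring_1,ring_char_0} poly)" shows "Pos (a*b)"
proof -
  have la: "lead_coeff a \<in> \<nat>" "lead_coeff a \<noteq> 0" "lead_coeff b \<in> \<nat>" "lead_coeff b \<noteq> 0"
    using assms by (auto simp: Pos_def)
  then obtain k m where km: "lead_coeff a = of_nat k" "lead_coeff b = of_nat m" "k \<noteq> 0" "m \<noteq> 0"
    by (metis Nats_cases of_nat_0)
  have "coeff (a*b) (degree a + degree b) = of_nat (k*m)"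
    by (simp add: coeff_mult_degree_sum km)
  hence "a*b \<noteq> 0" using km by (metis coeff_0 mult_eq_0_iff of_nat_eq_0_iff)
  moreover have "coeff (a*b) i \<in> \<nat>" for i
    unfolding coeff_mult using assms by (intro Nats_sum) (auto simp: Pos_def)
  ultimately show ?thesis by (simp add: Pos_def)
qed

lemma Pos_1: "Pos (1::'a::{comm_ring_1,ring_char_0} poly)"
  by (simp add: Pos_def coeff_1)

lemma Pos_X: "Pos ([:0,1:]::'a::{comm_ring_1,ring_char_0} poly)"
  by (simp add: Pos_def coeff_pCons split: nat.splits)

lemma Pos_pow: "Pos ((c::'a::{comm_ring_1,ring_char_0} poly) ^ n)" if "Pos c"
  using that by (induction n) (auto intro: Pos_mult Pos_1)

definition PC :: "('b \<Rightarrow>\<^sub>0 'a::{comm_ring_1,ring_char_0} poly) \<Rightarrow> bool" where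
  "PC f \<longleftrightarrow> (\<forall>w\<in>Poly_Mapping.keys f. Pos (Poly_Mapping.lookup f w))"

lemma PC_add: assumes "PC f" "PC g"
  shows "PC (f+g) \<and> Poly_Mapping.keys (f+g) = Poly_Mapping.keys f \<union> Poly_Mapping.keys g"
proof -
  have z: "Poly_Mapping.lookup h w = 0 \<or> Pos (Poly_Mapping.lookup h w)" if "PC h" for h and w
    using that unfolding PC_def by (metis in_keys_iff)
  have "Pos (Poly_Mapping.lookup f w + Poly_Mapping.lookup g w)" if "w \<in> Poly_Mapping.keys f \<union> Poly_Mapping.keys g" for w
    using that z[OF assms(1), of w] z[OF assms(2), of w] by (auto simp: in_keys_iff Pos_add)
  note P = this
  have K: "Poly_Mapping.keys (f+g) = Poly_Mapping.keys f \<union> Poly_Mapping.keys g"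
  proof (intro set_eqI iffI)
    fix w assume "w \<in> Poly_Mapping.keys (f+g)"
    then show "w \<in> Poly_Mapping.keys f \<union> Poly_Mapping.keys g" by (auto simp: in_keys_iff lookup_add)
  next
    fix w assume "w \<in> Poly_Mapping.keys f \<union> Poly_Mapping.keys g"
    then show "w \<in> Poly_Mapping.keys (f+g)" using P[of w] Pos_nz by (auto simp: in_keys_iff lookup_add)
  qed
  show ?thesis unfolding PC_def K using P by (simp add: lookup_add)
qed

lemma PC_sum: "finite J \<Longrightarrow> (\<And>j. j \<in> J \<Longrightarrow> PC (F j)) \<Longrightarrow>
   PC (\<Sum>j\<in>J. F j) \<and> Poly_Mapping.keys (\<Sum>j\<in>J. F j) = (\<Union>j\<in>J. Poly_Mapping.keys (F j))"
proof (induction J rule: finite_induct)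
  case empty then show ?case by (simp add: PC_def)
next
  case (insert x F) then show ?case using PC_add by (simp add: PC_add)
qed

lemma PC_map: assumes "Pos a" "PC g"
  shows "PC (Poly_Mapping.map (\<lambda>c. a*c) g) \<and> Poly_Mapping.keys (Poly_Mapping.map (\<lambda>c. a*c) g) = Poly_Mapping.keys g"
proof -
  have "Pos (a * Poly_Mapping.lookup g w)" if "w \<in> Poly_Mapping.keys g" for w
    using that assms Pos_mult unfolding PC_def by blast
  note P = this
  have K: "Poly_Mapping.keys (Poly_Mapping.map (\<lambda>c. a*c) g) = Poly_Mapping.keys g"
    using P Pos_nz by (fastforce simp: in_keys_iff map.rep_eq when_def)
  show ?thesis unfolding PC_def K using P by (simp add: map.rep_eq when_def in_keys_iff)
qed

lemma PC_lin_ext: assumes "PC f" "\<And>w. w \<in> Poly_Mapping.keys f \<Longrightarrow> PC (g w)"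
  shows "PC (lin_ext g f) \<and> Poly_Mapping.keys (lin_ext g f) = (\<Union>w\<in>Poly_Mapping.keys f. Poly_Mapping.keys (g w))"
proof -
  have "PC (Poly_Mapping.map (\<lambda>c. Poly_Mapping.lookup f w * c) (g w)) \<and>
     Poly_Mapping.keys (Poly_Mapping.map (\<lambda>c. Poly_Mapping.lookup f w * c) (g w)) = Poly_Mapping.keys (g w)"
    if "w \<in> Poly_Mapping.keys f" for w
    using that assms PC_map by (metis PC_def)
  then show ?thesis unfolding lin_ext_def
    using PC_sum[of "Poly_Mapping.keys f" "\<lambda>w. Poly_Mapping.map (\<lambda>c. Poly_Mapping.lookup f w * c) (g w)"]
    by simp
qed

lemma PC_single: "Pos c \<Longrightarrow> PC (Poly_Mapping.single k c) \<and> Poly_Mapping.keys (Poly_Mapping.single k c) = {k}"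
  by (auto simp: PC_def dest: Pos_nz)

fun Rw :: "letter \<Rightarrow> letter list" where
  "Rw (MX, j) = [(MX, j), (MY, Suc j)]"
| "Rw (MY, j) = [(MX, j)]"

lemma R_eq: "R_AndI l = Poly_Mapping.single (Rw l) ([:0,1:] ^ snd l)"
  by (cases l; cases "fst l") auto

definition Dset :: "letter list \<Rightarrow> letter list set" where
  "Dset w = (\<lambda>j. AIO (take j w @ Rw (w!j) @ map up_letter (drop (Suc j) w))) ` {..<length w}"

lemma D_word_PC: "PC (D_word w :: 'a::{comm_ring_1,ring_char_0} elt) \<and> Poly_Mapping.keys (D_word w :: 'a elt) = Dset w"
proof -
  define G where "G j = lin_ext (\<lambda>u. Poly_Mapping.single (AIO (take j w @ u @ map up_letter (drop (Suc j) w))) (1::'a poly))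
              (R_AndI (w ! j))" for j
  define a where "a j = AIO (take j w @ Rw (w!j) @ map up_letter (drop (Suc j) w))" for j
  have J: "PC (G j) \<and> Poly_Mapping.keys (G j) = {a j}" for j
  proof -
    have P: "PC (R_AndI (w ! j) :: 'a elt) \<and> Poly_Mapping.keys (R_AndI (w ! j) :: 'a elt) = {Rw (w!j)}"
      unfolding R_eq by (intro PC_single Pos_pow Pos_X)
    have S1: "\<And>k. PC (Poly_Mapping.single k (1::'a poly))" and S2: "\<And>k. Poly_Mapping.keys (Poly_Mapping.single k (1::'a poly)) = {k}"
      using PC_single[OF Pos_1, where 'a='a] by auto
    note L = PC_lin_ext[of "R_AndI (w ! j) :: 'a elt" "\<lambda>u. Poly_Mapping.single (AIO (take j w @ u @ map up_letter (drop (Suc j) w))) (1::'a poly)", OF conjunct1[OF P] S1]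
    have "Poly_Mapping.keys (G j) = {a j}"
      unfolding G_def conjunct2[OF L] conjunct2[OF P] a_def by (simp only: S2 UN_insert UN_empty Un_empty_right)
    moreover have "PC (G j)" unfolding G_def by (rule conjunct1[OF L])
    ultimately show ?thesis by blast
  qed
  have DW: "D_word w = (\<Sum>j<length w. G j)" by (simp only: D_word_def G_def)
  have DS: "Dset w = (\<Union>j<length w. {a j})" unfolding Dset_def a_def by blast
  note Q = PC_sum[of "{..<length w}" G, OF _ conjunct1[OF J]]
  have K: "\<And>j. Poly_Mapping.keys (G j) = {a j}" using J by blast
  show ?thesis unfolding DW DS using Q[OF finite_lessThan] by (simp only: K)
qed

lemma D_PC: "PC (f :: 'a::{comm_ring_1,ring_char_0} elt) \<Longrightarrow>
   PC (D_AndI f) \<and> Poly_Mapping.keys (D_AndI f) = (\<Union>w\<in>Poly_Mapping.keys f. Dset w)"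
proof -
  assume f: "PC f"
  have W: "\<And>w. PC (D_word w :: 'a elt)" "\<And>w. Poly_Mapping.keys (D_word w :: 'a elt) = Dset w"
    using D_word_PC by blast+
  note L = PC_lin_ext[of f D_word, OF f W(1)]
  show ?thesis unfolding D_AndI_def using L by (simp only: W(2))
qed

lemma iter_PC: "PC ((D_AndI ^^ n) (Poly_Mapping.single [(MX, 0)] (1 :: 'a::{comm_ring_1,ring_char_0} poly)))"
proof (induction n)
  case 0 then show ?case using PC_single[OF Pos_1] by simp
next
  case (Suc n) show ?case using D_PC[OF Suc.IH] by simp
qed

lemma iter_keys: "Poly_Mapping.keys ((D_AndI ^^ Suc n) (Poly_Mapping.single [(MX, 0)] (1 :: 'a::{comm_ring_1,ring_char_0} poly)))
   = (\<Union>w\<in>Poly_Mapping.keys ((D_AndI ^^ n) (Poly_Mapping.single [(MX, 0)] (1 :: 'a poly))). Dset w)"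
proof -
  have "PC ((D_AndI ^^ n) (Poly_Mapping.single [(MX, 0)] (1 :: 'a poly)))" by (rule iter_PC)
  from conjunct2[OF D_PC[OF this]] show ?thesis by (simp only: funpow.simps(2) o_apply)
qed

lemma iter_keys0: "Poly_Mapping.keys ((D_AndI ^^ 0) (Poly_Mapping.single [(MX, 0)] (1 :: 'a::{comm_ring_1,ring_char_0} poly)))
   = {[(MX,0)]}"
proof -
  have "PC (Poly_Mapping.single [(MX, 0::nat)] (1::'a poly)) \<and> Poly_Mapping.keys (Poly_Mapping.single [(MX, 0::nat)] (1::'a poly)) = {[(MX, 0)]}"
    using PC_single[OF Pos_1] by simp
  then show ?thesis by (simp only: funpow_0)
qed

lemma phi_keys: "PC (F :: 'a::{comm_ring_1,ring_char_0} elt) \<Longrightarrow> Poly_Mapping.keys (phi_nc F) = map fst ` Poly_Mapping.keys F"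
proof -
  assume F: "PC F"
  have "\<And>w::letter list. PC (Poly_Mapping.single (map fst w) (1::'a poly))" using PC_single[OF Pos_1] by simp
  note L = PC_lin_ext[of F "\<lambda>w. Poly_Mapping.single (map fst w) (1::'a poly)", OF F this]
  have S2: "\<And>k::master list. Poly_Mapping.keys (Poly_Mapping.single k (1::'a poly)) = {k}"
    using PC_single[OF Pos_1] by simp
  show ?thesis unfolding phi_nc_def conjunct2[OF L] S2 by blast
qed



fun wt :: "master list \<Rightarrow> nat" where
  "wt [] = 0"
| "wt (MX # v) = Suc (Suc (wt v))"
| "wt (MY # v) = Suc (wt v)"

lemma wt_append[simp]: "wt (a @ b) = wt a + wt b"
proof (induction a)
  case (Cons x a) then show ?case by (cases x) auto
qed simp

lemma wt_Cons': "wt (x # v) = wt [x] + wt v"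
  by (cases x) auto

lemma wt_count: "wt v = 2 * count (mset v) MX + count (mset v) MY"
proof (induction v)
  case (Cons x v) then show ?case by (cases x) auto
qed simp

lemma wt_AIO: "wt (map fst (AIO L)) = wt (map fst L)"
  unfolding wt_count AIO_def by simp

lemma fst_up[simp]: "fst (up_letter l) = fst l"
  by (cases l) simp

lemma map_fst_up[simp]: "map fst (map up_letter Q) = map fst Q"
  by (induction Q) auto

lemma fst_o_up[simp]: "fst \<circ> up_letter = fst"
  by (rule ext) simp

lemma wt_Rw: "wt (map fst (Rw l)) = Suc (wt [fst l])"
  by (cases l; cases "fst l") auto

lemma key0: "aio_key l = 0 \<Longrightarrow> l = (MX, 0)"
  by (cases l; cases "fst l") auto

lemma key_bounds: "2 * snd l \<le> aio_key l \<and> aio_key l \<le> 2 * snd l + 1"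
  by (cases l; cases "fst l") auto

lemma hd_AIO:
  assumes "(MX, 0) \<in> set L"
  shows "\<exists>r. AIO L = (MX, 0) # r"
proof -
  define s where "s = AIO L"
  have ss: "sorted (map aio_key s)" "set s = set L" unfolding s_def AIO_def by auto
  then obtain a s' where as: "s = a # s'" using assms by (cases s) auto
  have "aio_key a = 0"
  proof (cases "a = (MX, 0)")
    case False
    then have "(MX, 0) \<in> set s'" using assms ss as by auto
    then show ?thesis using ss(1) as by fastforce
  qed simp
  then have "a = (MX, 0)" by (rule key0)
  then show ?thesis using as s_def by auto
qed

fun Sset :: "nat \<Rightarrow> letter list set" where
  Sset_0: "Sset 0 = {[(MX,0)]}"
| Sset_Suc: "Sset (Suc n) = (\<Union>w\<in>Sset n. Dset w)"

lemma keys_Sset: "Poly_Mapping.keys ((D_AndI ^^ n) (Poly_Mapping.single [(MX, 0)] (1 :: 'a::{comm_ring_1,ring_char_0} poly))) = Sset n"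
proof (induction n)
  case 0 show ?case unfolding Sset_0 by (rule iter_keys0)
next
  case (Suc n) show ?case by (simp only: iter_keys Suc.IH Sset_Suc)
qed

lemma inv_a: "w \<in> Sset n \<Longrightarrow> (\<exists>r. w = (MX,0) # r) \<and> wt (map fst w) = n + 2"
proof (induction n arbitrary: w)
  case 0
  then have "w = [(MX,0)]" by simp
  then show ?case by simp
next
  case (Suc n)
  then obtain w' j where w': "w' \<in> Sset n" "j < length w'"
    and w: "w = AIO (take j w' @ Rw (w'!j) @ map up_letter (drop (Suc j) w'))"
    by (auto simp: Sset_Suc Dset_def)
  from Suc.IH[OF w'(1)] obtain r where r: "w' = (MX,0) # r" and wt': "wt (map fst w') = n + 2" by blast
  obtain P l Q where PlQ: "w' = P @ l # Q" "take j w' = P" "w'!j = l" "drop (Suc j) w' = Q"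
    by (rule that[OF id_take_nth_drop[OF w'(2)] refl refl refl])
  have w2: "w = AIO (P @ Rw l @ map up_letter Q)" using w PlQ(2-4) by simp
  have c: "wt (fst l # map fst Q) = wt [fst l] + wt (map fst Q)" by (rule wt_Cons')
  have "wt (map fst w) = Suc n + 2" unfolding w2 wt_AIO using wt' PlQ(1) c by (simp add: wt_Rw)
  moreover have "(MX,0) \<in> set (P @ Rw l @ map up_letter Q)"
  proof (cases P)
    case Nil then show ?thesis using r PlQ(1) by simp
  next
    case (Cons a P') then show ?thesis using r PlQ(1) by simp
  qed
  ultimately show ?case using hd_AIO w2 by blast
qed

fun cwf :: "nat \<Rightarrow> master list \<Rightarrow> letter list" where
  "cwf i [] = []"
| "cwf i (a # p) = (a, i) # cwf (Suc i) p"

lemma cwf_append[simp]: "cwf i (s @ t) = cwf i s @ cwf (i + length s) t"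
  by (induction s arbitrary: i) auto

lemma cwf_fst[simp]: "map fst (cwf i p) = p"
  by (induction p arbitrary: i) auto

lemma cwf_up[simp]: "map up_letter (cwf i p) = cwf (Suc i) p"
  by (induction p arbitrary: i) auto

lemma cwf_ge: "x \<in> set (cwf i p) \<Longrightarrow> i \<le> snd x"
  by (induction p arbitrary: i) (auto, fastforce)

lemma cwf_sorted: "sorted (map aio_key (cwf i p))"
proof (induction p arbitrary: i)
  case (Cons a p)
  have "aio_key (a, i) \<le> aio_key y" if "y \<in> set (cwf (Suc i) p)" for y
    using cwf_ge[OF that] key_bounds[of "(a,i)"] key_bounds[of y] by simp
  then show ?case using Cons by auto
qed simp

lemma AIO_cwf: "AIO (cwf i p) = cwf i p"
  unfolding AIO_def by (rule sort_key_id_if_sorted[OF cwf_sorted])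

lemma Dset_intro: "w = P @ l # Q \<Longrightarrow> AIO (P @ Rw l @ map up_letter Q) \<in> Dset w"
  unfolding Dset_def
  by (rule image_eqI[where x = "length P"]) (auto simp: nth_append)

lemma split_MXMY: "p \<noteq> [] \<Longrightarrow> hd p = MX \<Longrightarrow> last p = MY \<Longrightarrow> \<exists>A B. p = A @ MX # MY # B"
proof (induction p)
  case (Cons a q)
  then have a: "a = MX" by simp
  then have "q \<noteq> []" using Cons by auto
  then obtain b q' where q: "q = b # q'" by (cases q) auto
  show ?case
  proof (cases b)
    case MY then show ?thesis using a q by (metis append_Nil)
  next
    case MX
    then obtain A B where "q = A @ MX # MY # B" using Cons q by auto
    then show ?thesis using a by (metis append_Cons)
  qed
qed simp

lemma wt0: "wt v = 0 \<Longrightarrow> v = []"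
  by (cases v rule: wt.cases) auto

lemma inv_b: "p \<noteq> [] \<Longrightarrow> hd p = MX \<Longrightarrow> wt p = n + 2 \<Longrightarrow> cwf 0 p \<in> Sset n"
proof (induction n arbitrary: p)
  case 0
  then obtain v where "p = MX # v" by (cases p) auto
  then have "p = [MX]" using 0 wt0 by auto
  then show ?case by (simp add: Sset_0)
next
  case (Suc n)
  show ?case
  proof (cases "last p")
    case MX
    then obtain s where s: "p = s @ [MX]" using Suc.prems(1) by (metis append_butlast_last_id)
    have "s \<noteq> []" using s Suc.prems by auto
    then have h: "s @ [MY] \<noteq> [] \<and> hd (s @ [MY]) = MX \<and> wt (s @ [MY]) = n + 2"
      using s Suc.prems by auto
    have "cwf 0 (s @ [MY]) \<in> Sset n" using Suc.IH h by blast
    moreover have "cwf 0 (s @ [MY]) = cwf 0 s @ (MY, length s) # []" by simp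
    ultimately have "AIO (cwf 0 s @ Rw (MY, length s) @ map up_letter []) \<in> Dset (cwf 0 (s @ [MY]))"
      using Dset_intro by blast
    moreover have "cwf 0 s @ Rw (MY, length s) @ map up_letter [] = cwf 0 p" using s by simp
    ultimately have "cwf 0 p \<in> Dset (cwf 0 (s @ [MY]))" by (metis AIO_cwf)
    then show ?thesis using \<open>cwf 0 (s @ [MY]) \<in> Sset n\<close> Sset_Suc by blast
  next
    case MY
    then obtain A B where p: "p = A @ MX # MY # B" using split_MXMY Suc.prems by blast
    have h: "A @ MX # B \<noteq> [] \<and> hd (A @ MX # B) = MX \<and> wt (A @ MX # B) = n + 2"
      using p Suc.prems by (cases A) auto
    have "cwf 0 (A @ MX # B) \<in> Sset n" using Suc.IH h by blast
    moreover have "cwf 0 (A @ MX # B) = cwf 0 A @ (MX, length A) # cwf (Suc (length A)) B" by simp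
    ultimately have "AIO (cwf 0 A @ Rw (MX, length A) @ map up_letter (cwf (Suc (length A)) B)) \<in> Dset (cwf 0 (A @ MX # B))"
      using Dset_intro by blast
    moreover have "cwf 0 A @ Rw (MX, length A) @ map up_letter (cwf (Suc (length A)) B) = cwf 0 p" using p by simp
    ultimately have "cwf 0 p \<in> Dset (cwf 0 (A @ MX # B))" by (metis AIO_cwf)
    then show ?thesis using \<open>cwf 0 (A @ MX # B) \<in> Sset n\<close> Sset_Suc by blast
  qed
qed

definition T :: "nat \<Rightarrow> master list set" where
  "T n = {p. p \<noteq> [] \<and> hd p = MX \<and> wt p = n + 2}"

lemma image_Sset: "map fst ` Sset n = T n"
proof
  show "map fst ` Sset n \<subseteq> T n" using inv_a unfolding T_def by fastforce
next
  show "T n \<subseteq> map fst ` Sset n"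
  proof
    fix p assume "p \<in> T n"
    then have "cwf 0 p \<in> Sset n" using inv_b unfolding T_def by blast
    then show "p \<in> map fst ` Sset n" by (metis cwf_fst image_eqI)
  qed
qed

definition W :: "nat \<Rightarrow> master list set" where
  "W m = {v. wt v = m}"

lemma W_SS: "W (Suc (Suc m)) = Cons MX ` W m \<union> Cons MY ` W (Suc m)"
proof
  show "W (Suc (Suc m)) \<subseteq> Cons MX ` W m \<union> Cons MY ` W (Suc m)"
  proof
    fix v assume "v \<in> W (Suc (Suc m))"
    then show "v \<in> Cons MX ` W m \<union> Cons MY ` W (Suc m)"
      unfolding W_def by (cases v rule: wt.cases) auto
  qed
qed (auto simp: W_def)

lemma W_card: "finite (W m) \<and> card (W m) = fib (Suc m)"
proof (induction m rule: fib.induct)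
  case 1
  have "W 0 = {[]}" unfolding W_def using wt0 by auto
  then show ?case by simp
next
  case 2
  have "W (Suc 0) = {[MY]}" unfolding W_def
  proof (intro set_eqI iffI)
    fix v assume "v \<in> {v. wt v = Suc 0}" then show "v \<in> {[MY]}"
      by (cases v rule: wt.cases) (auto dest: wt0)
  qed auto
  then show ?case by simp
next
  case (3 m)
  have d: "Cons MX ` W m \<inter> Cons MY ` W (Suc m) = {}" by auto
  have "card (W (Suc (Suc m))) = card (Cons MX ` W m) + card (Cons MY ` W (Suc m))"
    unfolding W_SS using 3 d by (intro card_Un_disjoint) auto
  also have "\<dots> = card (W m) + card (W (Suc m))" by (simp add: card_image)
  finally show ?case using 3 W_SS by simp
qed

lemma T_card: "card (T n) = fib (n + 1)"
proof -
  have "T n = Cons MX ` W n" unfolding T_def W_def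
  proof (intro set_eqI iffI)
    fix p assume "p \<in> {p. p \<noteq> [] \<and> hd p = MX \<and> wt p = n + 2}"
    then show "p \<in> Cons MX ` {v. wt v = n}" by (cases p) auto
  qed auto
  then show ?thesis using W_card[of n] by (simp add: card_image)
qed

theorem proposition6p10:
  fixes n :: nat
  assumes "n \<ge> 1"
  shows "card (Poly_Mapping.keys (phi_nc ((D_AndI ^^ n) (Poly_Mapping.single [(MX, 0)] (1 :: ('a::{comm_ring_1, ring_char_0}) poly)))))
         = fib (n + 1)"
  using phi_keys[OF iter_PC[where 'a='a and n=n]] keys_Sset[where 'a='a and n=n] image_Sset T_card by simp

end
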